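(* Let $K$ be a non-Archimedean local field with normalized absolute value $|\cdot|_K$, residue field of cardinality $q$, and let $\alpha>0$. For a radial function $x\mapsto u(|x|_K)$ on $K$ define $$(I^\alpha u)(x)=\frac{1-q^{-\alpha}}{1-q^{\alpha-1}}\int_{|y|_K\le|x|_K}\big(|x-y|_K^{\alpha-1}-|y|_K^{\alpha-1}\big)u(|y|_K)\,dy\quad(\alpha\neq1),$$ $$(I^1 u)(x)=\frac{1-q}{q\log q}\int_{|y|_K\le|x|_K}\big(\log|x-y|_K-\log|y|_K\big)u(|y|_K)\,dy .$$ Suppose that for some $m\in\mathbb Z$, $\sum_{k=-\infty}^m\max(q^k,q^{\alpha k})|u(q^k)|<\infty$ if $\alpha\ne1$, and $\sum_{k=-\infty}^m|k|q^k|u(q^k)|<\infty$ if $\alpha=1$. Then $I^\alpha u$ exists, it is a radial function, and for every $x\neq0$, $$(I^\alpha u)(|x|_K)=q^{-\alpha}|x|_K^\alpha u(|x|_K)+\frac{1-q^{-\alpha}}{1-q^{\alpha-1}}\int_{|y|_K<|x|_K}\big(|x|_K^{\alpha-1}-|y|_K^{\alpha-1}\big)u(|y|_K)\,dy\quad(\alpha\ne1),$$ $$(I^1u)(|x|_K)=q^{-1}|x|_K u(|x|_K)+\frac{1-q}{q\log q}\int_{|y|_K<|x|_K}\big(\log|x|_K-\log|y|_K\big)u(|y|_K)\,dy .$$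
   Context: $K$ is a non-discrete totally disconnected locally compact field; its absolute value $|\cdot|_K$ is normalized so that its nonzero values are $q^N$, $N\in\mathbb Z$, where $q$ is the cardinality of the residue field $O/P$ ($O=\{|x|_K\le1\}$, $P=\{|x|_K<1\}$). $dx$ is the additive Haar measure on $K$ with the measure of $O$ equal to $1$. A radial function is one of the form $x\mapsto u(|x|_K)$. *)

theory Defs
  imports "HOL-Analysis.Analysis"
begin

text \<open>A non-Archimedean local field is modelled by a field type 'a together with
 an absolute value absK, a measure M (the additive Haar measure) and the integer q
 (the cardinality of the residue field O/P).\<close>

definition ring_of_integers :: "('a \<Rightarrow> real) \<Rightarrow> 'a set" where
  "ring_of_integers absK = {x. absK x \<le> 1}"

definition max_ideal :: "('a \<Rightarrow> real) \<Rightarrow> 'a set" where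
  "max_ideal absK = {x. absK x < 1}"

definition residue_field :: "('a::ab_group_add \<Rightarrow> real) \<Rightarrow> 'a set set" where
  "residue_field absK = (\<lambda>x. (\<lambda>p. x + p) ` max_ideal absK) ` ring_of_integers absK"

definition absK_topology :: "('a::ab_group_add \<Rightarrow> real) \<Rightarrow> 'a topology" where
  "absK_topology absK = Metric_space.mtopology UNIV (\<lambda>x y. absK (x - y))"

definition nonarch_local_field :: "('a::field \<Rightarrow> real) \<Rightarrow> 'a measure \<Rightarrow> nat \<Rightarrow> bool" where
  "nonarch_local_field absK M q \<longleftrightarrow>
     \<comment> \<open>non-Archimedean absolute value\<close>
     (\<forall>x. absK x \<ge> 0) \<and> (\<forall>x. absK x = 0 \<longleftrightarrow> x = 0) \<and>
     (\<forall>x y. absK (x * y) = absK x * absK y) \<and>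
     (\<forall>x y. absK (x + y) \<le> max (absK x) (absK y)) \<and>
     \<comment> \<open>finite residue field of cardinality q\<close>
     finite (residue_field absK) \<and> q = card (residue_field absK) \<and>
     \<comment> \<open>normalization: the nonzero values are exactly q^N, N in Z (hence non-discrete)\<close>
     absK ` (UNIV - {0}) = range (\<lambda>N::int. real q powi N) \<and>
     \<comment> \<open>locally compact and totally disconnected for the induced topology\<close>
     locally_compact_space (absK_topology absK) \<and>
     (\<forall>S. connectedin (absK_topology absK) S \<longrightarrow> (\<exists>a. S \<subseteq> {a})) \<and>
     \<comment> \<open>additive Haar measure on the Borel sets, normalized by mu(O) = 1\<close>
     space M = UNIV \<and> sets M = sigma_sets UNIV (Collect (openin (absK_topology absK))) \<and>
     (\<forall>a A. A \<in> sets M \<longrightarrow> emeasure M ((\<lambda>y. a + y) ` A) = emeasure M A) \<and>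
     emeasure M (ring_of_integers absK) = 1"

definition riesz_kernel :: "('a::field \<Rightarrow> real) \<Rightarrow> real \<Rightarrow> (real \<Rightarrow> real) \<Rightarrow> 'a \<Rightarrow> 'a \<Rightarrow> real" where
  "riesz_kernel absK \<alpha> u x y =
     (if \<alpha> \<noteq> 1 then (absK (x - y) powr (\<alpha> - 1) - absK y powr (\<alpha> - 1)) * u (absK y)
      else (ln (absK (x - y)) - ln (absK y)) * u (absK y))"

definition riesz_const :: "nat \<Rightarrow> real \<Rightarrow> real" where
  "riesz_const q \<alpha> =
     (if \<alpha> \<noteq> 1 then (1 - real q powr (-\<alpha>)) / (1 - real q powr (\<alpha> - 1))
      else (1 - real q) / (real q * ln (real q)))"

definition riesz_pot :: "('a::field \<Rightarrow> real) \<Rightarrow> 'a measure \<Rightarrow> nat \<Rightarrow> real \<Rightarrow> (real \<Rightarrow> real) \<Rightarrow> 'a \<Rightarrow> real" where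
  "riesz_pot absK M q \<alpha> u x =
     riesz_const q \<alpha> * (LINT y : {y. absK y \<le> absK x} | M. riesz_kernel absK \<alpha> u x y)"

end

theory Submission
  imports Defs
begin


lemma step_int:
  fixes M :: "'a measure" and A :: "nat \<Rightarrow> 'a set" and c :: "nat \<Rightarrow> real" and f :: "'a \<Rightarrow> real"
  assumes disj: "disjoint_family A" and fm: "\<And>i. A i \<in> fmeasurable M"
    and summ: "summable (\<lambda>i. \<bar>c i\<bar> * measure M (A i))"
    and inA: "\<And>i y. y \<in> A i \<Longrightarrow> f y = c i" and out: "\<And>y. (\<And>i. y \<notin> A i) \<Longrightarrow> f y = 0"
  shows "integrable M f \<and> integral\<^sup>L M f = (\<Sum>i. c i * measure M (A i))"
proof -
  define g where "g i y = indicator (A i) y * c i" for i y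
  have gsum: "(\<lambda>i. g i y) = (\<lambda>i. if i = j then c j else 0)" if "y \<in> A j" for y j
  proof
    fix i show "g i y = (if i = j then c j else 0)"
    proof (cases "i = j")
      case True then show ?thesis using that by (simp add: g_def)
    next
      case False
      then have "y \<notin> A i" using that disj unfolding disjoint_family_on_def by blast
      then show ?thesis using False by (simp add: g_def)
    qed
  qed
  have feq: "f y = (\<Sum>i. g i y)" for y
  proof (cases "\<exists>j. y \<in> A j")
    case True
    then obtain j where j: "y \<in> A j" by blast
    show ?thesis unfolding gsum[OF j] using sums_single[of j "\<lambda>_. c j"] inA[OF j]
      by (simp add: sums_iff)
  next
    case False
    then have "f y = 0" using out by blast
    moreover have "(\<lambda>i. g i y) = (\<lambda>i. 0)" using False by (auto simp: g_def)
    ultimately show ?thesis by simp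
  qed
  have int: "integrable M (g i)" for i
    unfolding g_def using fm[of i] by (intro integrable_mult_left integrable_real_indicator) (auto simp: fmeasurable_def)
  have sn: "summable (\<lambda>i. norm (g i y))" for y
  proof (cases "\<exists>j. y \<in> A j")
    case True
    then obtain j where j: "y \<in> A j" by blast
    have "(\<lambda>i. norm (g i y)) = (\<lambda>i. if i = j then \<bar>c j\<bar> else 0)"
      using gsum[OF j] by (metis (mono_tags, lifting) norm_zero real_norm_def)
    then show ?thesis using sums_single[of j "\<lambda>_. \<bar>c j\<bar>"] by (simp add: sums_iff)
  next
    case False
    then have "(\<lambda>i. norm (g i y)) = (\<lambda>i. 0)" by (auto simp: g_def)
    then show ?thesis by simp
  qed
  have ni: "(\<integral>y. norm (g i y) \<partial>M) = \<bar>c i\<bar> * measure M (A i)" for i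
  proof -
    have "(\<lambda>y. norm (g i y)) = (\<lambda>y. indicator (A i) y * \<bar>c i\<bar>)"
      by (auto simp: g_def indicator_def abs_mult)
    moreover have "A i \<inter> space M = A i" using fm[of i] by (auto dest: sets.sets_into_space)
    ultimately show ?thesis by simp
  qed
  have gi: "integral\<^sup>L M (g i) = c i * measure M (A i)" for i
  proof -
    have "A i \<inter> space M = A i" using fm[of i] by (auto dest: sets.sets_into_space)
    then show ?thesis unfolding g_def by simp
  qed
  have f_eq: "f = (\<lambda>y. \<Sum>i. g i y)" using feq by blast
  have s2: "summable (\<lambda>i. (\<integral>y. norm (g i y) \<partial>M))" unfolding ni by (rule summ)
  show ?thesis unfolding f_eq
    using integrable_suminf[of M g, OF int _ s2] integral_suminf[of M g, OF int _ s2] sn gi by simp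
qed

locale nlf =
  fixes absK :: "'a::field \<Rightarrow> real" and M :: "'a measure" and q :: nat
  assumes K: "nonarch_local_field absK M q"
begin

lemmas KD = K[unfolded nonarch_local_field_def]
lemma nonneg0: "(\<forall>x. absK x \<ge> 0)" by (rule KD[THEN conjunct1])
lemma zero0: "(\<forall>x. absK x = 0 \<longleftrightarrow> x = 0)" by (rule KD[THEN conjunct2, THEN conjunct1])
lemma mult0: "(\<forall>x y. absK (x * y) = absK x * absK y)" by (rule KD[THEN conjunct2, THEN conjunct2, THEN conjunct1])
lemma ultra0: "(\<forall>x y. absK (x + y) \<le> max (absK x) (absK y))" by (rule KD[THEN conjunct2, THEN conjunct2, THEN conjunct2, THEN conjunct1])
lemma finrf: "finite (residue_field absK)" by (rule KD[THEN conjunct2, THEN conjunct2, THEN conjunct2, THEN conjunct2, THEN conjunct1])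
lemma qcard: "q = card (residue_field absK)" by (rule KD[THEN conjunct2, THEN conjunct2, THEN conjunct2, THEN conjunct2, THEN conjunct2, THEN conjunct1])
lemma rng: "absK ` (UNIV - {0}) = range (\<lambda>N::int. real q powi N)" by (rule KD[THEN conjunct2, THEN conjunct2, THEN conjunct2, THEN conjunct2, THEN conjunct2, THEN conjunct2, THEN conjunct1])
lemma lc: "locally_compact_space (absK_topology absK)" by (rule KD[THEN conjunct2, THEN conjunct2, THEN conjunct2, THEN conjunct2, THEN conjunct2, THEN conjunct2, THEN conjunct2, THEN conjunct1])
lemma tdc: "(\<forall>S. connectedin (absK_topology absK) S \<longrightarrow> (\<exists>a. S \<subseteq> {a}))" by (rule KD[THEN conjunct2, THEN conjunct2, THEN conjunct2, THEN conjunct2, THEN conjunct2, THEN conjunct2, THEN conjunct2, THEN conjunct2, THEN conjunct1])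
lemma spaceM: "space M = UNIV" by (rule KD[THEN conjunct2, THEN conjunct2, THEN conjunct2, THEN conjunct2, THEN conjunct2, THEN conjunct2, THEN conjunct2, THEN conjunct2, THEN conjunct2, THEN conjunct1])
lemma setsM: "sets M = sigma_sets UNIV (Collect (openin (absK_topology absK)))" by (rule KD[THEN conjunct2, THEN conjunct2, THEN conjunct2, THEN conjunct2, THEN conjunct2, THEN conjunct2, THEN conjunct2, THEN conjunct2, THEN conjunct2, THEN conjunct2, THEN conjunct1])
lemma transl0: "(\<forall>a A. A \<in> sets M \<longrightarrow> emeasure M ((\<lambda>y. a + y) ` A) = emeasure M A)" by (rule KD[THEN conjunct2, THEN conjunct2, THEN conjunct2, THEN conjunct2, THEN conjunct2, THEN conjunct2, THEN conjunct2, THEN conjunct2, THEN conjunct2, THEN conjunct2, THEN conjunct2, THEN conjunct1])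
lemma measO: "emeasure M (ring_of_integers absK) = 1" by (rule KD[THEN conjunct2, THEN conjunct2, THEN conjunct2, THEN conjunct2, THEN conjunct2, THEN conjunct2, THEN conjunct2, THEN conjunct2, THEN conjunct2, THEN conjunct2, THEN conjunct2, THEN conjunct2])
lemma nonneg: "absK x \<ge> 0" using nonneg0 by blast
lemma zero_iff[simp]: "absK x = 0 \<longleftrightarrow> x = 0" using zero0 by blast
lemma abs0[simp]: "absK 0 = 0" using zero0 by blast
lemma mult: "absK (x * y) = absK x * absK y" using mult0 by blast
lemma ultra: "absK (x + y) \<le> max (absK x) (absK y)" using ultra0 by blast
lemma transl: "A \<in> sets M \<Longrightarrow> emeasure M ((\<lambda>y. a + y) ` A) = emeasure M A" using transl0 by blast
declare spaceM[simp]

lemma abs1[simp]: "absK 1 = 1"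
proof -
  have "absK 1 = absK 1 * absK 1" using mult[of 1 1] by simp
  moreover have "absK 1 \<noteq> 0" by simp
  ultimately have "absK 1 * (absK 1 - 1) = 0" by (simp add: algebra_simps)
  then show ?thesis using \<open>absK 1 \<noteq> 0\<close> by simp
qed

lemma absm1: "absK (-1) = 1"
proof -
  have "absK (-1) * absK (-1) = 1" using mult[of "-1" "-1"] by simp
  then have "(absK (-1) - 1) * (absK (-1) + 1) = 0" by (simp add: algebra_simps)
  moreover have "absK (-1) + 1 > 0" using nonneg[of "-1"] by simp
  ultimately show ?thesis by simp
qed

lemma absneg[simp]: "absK (- x) = absK x"
  using mult[of "-1" x] absm1 by simp

lemma abs_sub: "absK (x - y) = absK (y - x)"
  by (metis absneg minus_diff_eq)

lemma abs_div: "y \<noteq> 0 \<Longrightarrow> absK (x / y) = absK x / absK y"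
  using mult[of "x/y" y] by (simp add: field_simps)

lemma strict: "absK b < absK a \<Longrightarrow> absK (a + b) = absK a"
proof -
  assume h: "absK b < absK a"
  have "absK (a + b) \<le> absK a" using ultra[of a b] h by simp
  moreover have "absK a \<le> max (absK (a+b)) (absK b)" using ultra[of "a+b" "-b"] by simp
  ultimately show ?thesis using h by linarith
qed

lemma q_ge2: "q \<ge> 2"
proof -
  let ?P = "max_ideal absK"
  have a: "(\<lambda>p. 0 + p) ` ?P \<in> residue_field absK"
    unfolding residue_field_def ring_of_integers_def by (rule imageI) simp
  have b: "(\<lambda>p. 1 + p) ` ?P \<in> residue_field absK"
    unfolding residue_field_def ring_of_integers_def by (rule imageI) simp
  have "0 \<in> ?P" unfolding max_ideal_def by simp
  hence "1 \<in> (\<lambda>p. 1 + p) ` ?P" by force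
  moreover have "1 \<notin> (\<lambda>p. 0 + p) ` ?P" unfolding max_ideal_def by auto
  ultimately have "(\<lambda>p. 0 + p) ` ?P \<noteq> (\<lambda>p. 1 + p) ` ?P" by blast
  hence "card {(\<lambda>p. 0 + p) ` ?P, (\<lambda>p. 1 + p) ` ?P} = 2" by simp
  moreover have "card {(\<lambda>p. 0 + p) ` ?P, (\<lambda>p. 1 + p) ` ?P} \<le> card (residue_field absK)"
    using a b finrf by (intro card_mono) auto
  ultimately show ?thesis using qcard by simp
qed

lemma q_gt1: "real q > 1" using q_ge2 by simp

lemma disc: "x \<noteq> 0 \<Longrightarrow> \<exists>n::int. absK x = real q powi n"
proof -
  assume "x \<noteq> 0"
  then have "absK x \<in> absK ` (UNIV - {0})" by simp
  then have "absK x \<in> range (\<lambda>N::int. real q powi N)" by (simp only: rng)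
  then show ?thesis by auto
qed

lemma exval: "\<exists>t. absK t = real q powi n"
proof -
  have "real q powi n \<in> range (\<lambda>N::int. real q powi N)" by simp
  then have "real q powi n \<in> absK ` (UNIV - {0})" by (simp only: rng)
  then show ?thesis by auto
qed

lemma qpos: "real q powi k > 0" using q_gt1 by simp

lemma powi_less_iff: "real q powi i < real q powi j \<longleftrightarrow> i < j"
  using q_gt1 power_int_strict_increasing[of i j "real q"] power_int_increasing[of j i "real q"]
  by (cases "i < j") auto

lemma powi_le_iff: "real q powi i \<le> real q powi j \<longleftrightarrow> i \<le> j"
  using q_gt1 power_int_strict_increasing[of j i "real q"] power_int_increasing[of i j "real q"]
  by (cases "i \<le> j") auto

lemma lt_le: "absK y < real q powi n \<Longrightarrow> absK y \<le> real q powi (n - 1)"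
proof -
  assume h: "absK y < real q powi n"
  show ?thesis
  proof (cases "y = 0")
    case True then show ?thesis using qpos[of "n-1"] by simp
  next
    case False
    then obtain j where j: "absK y = real q powi j" using disc by blast
    then have "j < n" using h powi_less_iff by simp
    then show ?thesis using j powi_le_iff by simp
  qed
qed


lemma metric: "Metric_space UNIV (\<lambda>x y. absK (x - y))"
proof
  fix x y z :: 'a
  show "0 \<le> absK (x - y)" by (rule nonneg)
  show "absK (x - y) = absK (y - x)" by (rule abs_sub)
  show "absK (x - y) = 0 \<longleftrightarrow> x = y" by simp
  have "absK (x - z) = absK ((x - y) + (y - z))" by simp
  also have "\<dots> \<le> max (absK (x - y)) (absK (y - z))" by (rule ultra)
  also have "\<dots> \<le> absK (x - y) + absK (y - z)" using nonneg[of "x-y"] nonneg[of "y-z"] by simp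
  finally show "absK (x - z) \<le> absK (x - y) + absK (y - z)" .
qed

lemma open_meas:
  assumes "\<And>y. y \<in> U \<Longrightarrow> \<exists>r>0. \<forall>z. absK (y - z) < r \<longrightarrow> z \<in> U"
  shows "U \<in> sets M"
proof -
  have "openin (absK_topology absK) U"
    unfolding absK_topology_def Metric_space.openin_mtopology[OF metric]
  proof (intro conjI allI impI)
    show "U \<subseteq> UNIV" by simp
    fix y assume "y \<in> U"
    then obtain r where "r > 0" "\<forall>z. absK (y - z) < r \<longrightarrow> z \<in> U" using assms by blast
    then show "\<exists>r>0. Metric_space.mball UNIV (\<lambda>x y. absK (x - y)) y r \<subseteq> U"
      by (auto simp: Metric_space.in_mball[OF metric])
  qed
  then show ?thesis unfolding setsM by (intro sigma_sets.Basic) simp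
qed

lemma ball_lt_meas: "{z. absK (z - b) < r} \<in> sets M"
proof (rule open_meas)
  fix y assume y: "y \<in> {z. absK (z - b) < r}"
  have "\<forall>z. absK (y - z) < r \<longrightarrow> z \<in> {z. absK (z - b) < r}"
  proof (intro allI impI)
    fix z assume h: "absK (y - z) < r"
    have "absK (z - b) = absK ((z - y) + (y - b))" by simp
    also have "\<dots> \<le> max (absK (z - y)) (absK (y - b))" by (rule ultra)
    finally show "z \<in> {z. absK (z - b) < r}" using h y abs_sub[of z y] by auto
  qed
  moreover have "r > 0" using y nonneg[of "y - b"] by simp
  ultimately show "\<exists>e>0. \<forall>z. absK (y - z) < e \<longrightarrow> z \<in> {z. absK (z - b) < r}" by blast
qed

lemma ball_le_meas: "r > 0 \<Longrightarrow> {z. absK (z - b) \<le> r} \<in> sets M"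
proof (rule open_meas)
  assume r: "r > 0"
  fix y assume y: "y \<in> {z. absK (z - b) \<le> r}"
  have "\<forall>z. absK (y - z) < r \<longrightarrow> z \<in> {z. absK (z - b) \<le> r}"
  proof (intro allI impI)
    fix z assume h: "absK (y - z) < r"
    have "absK (z - b) = absK ((z - y) + (y - b))" by simp
    also have "\<dots> \<le> max (absK (z - y)) (absK (y - b))" by (rule ultra)
    finally show "z \<in> {z. absK (z - b) \<le> r}" using h y abs_sub[of z y] by auto
  qed
  then show "\<exists>e>0. \<forall>z. absK (y - z) < e \<longrightarrow> z \<in> {z. absK (z - b) \<le> r}" using r by blast
qed

lemma sphere_meas: "r > 0 \<Longrightarrow> {z. absK (z - b) = r} \<in> sets M"
proof (rule open_meas)
  assume r: "r > 0"
  fix y assume y: "y \<in> {z. absK (z - b) = r}"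
  have "\<forall>z. absK (y - z) < r \<longrightarrow> z \<in> {z. absK (z - b) = r}"
  proof (intro allI impI)
    fix z assume h: "absK (y - z) < r"
    have "absK (z - b) = absK ((y - b) + (z - y))" by simp
    also have "\<dots> = absK (y - b)" using h y abs_sub[of z y] by (intro strict) auto
    finally show "z \<in> {z. absK (z - b) = r}" using y by auto
  qed
  then show "\<exists>e>0. \<forall>z. absK (y - z) < e \<longrightarrow> z \<in> {z. absK (z - b) = r}" using r by blast
qed

lemma nz_meas: "{z. absK (z - b) \<noteq> 0} \<in> sets M"
proof (rule open_meas)
  fix y assume y: "y \<in> {z. absK (z - b) \<noteq> 0}"
  have "\<forall>z. absK (y - z) < absK (y - b) \<longrightarrow> z \<in> {z. absK (z - b) \<noteq> 0}"
  proof (intro allI impI)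
    fix z assume h: "absK (y - z) < absK (y - b)"
    have "absK (z - b) = absK ((y - b) + (z - y))" by simp
    also have "\<dots> = absK (y - b)" using h abs_sub[of z y] by (intro strict) auto
    finally show "z \<in> {z. absK (z - b) \<noteq> 0}" using y by auto
  qed
  moreover have "absK (y - b) > 0" using y nonneg[of "y - b"] by (auto simp: less_le)
  ultimately show "\<exists>e>0. \<forall>z. absK (y - z) < e \<longrightarrow> z \<in> {z. absK (z - b) \<noteq> 0}" by blast
qed

lemma sing_meas: "{b} \<in> sets M"
proof -
  have "{b} = UNIV - {z. absK (z - b) \<noteq> 0}" by auto
  then show ?thesis using nz_meas[of b] by (metis sets.compl_sets spaceM)
qed

lemma scale_le: "t \<noteq> 0 \<Longrightarrow> (\<lambda>y. t * y) ` {y. absK y \<le> r} = {z. absK z \<le> absK t * r}"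
proof (intro equalityI subsetI)
  assume t: "t \<noteq> 0"
  fix z assume "z \<in> (\<lambda>y. t * y) ` {y. absK y \<le> r}"
  then show "z \<in> {z. absK z \<le> absK t * r}"
    using nonneg[of t] by (auto simp: mult intro: mult_left_mono)
next
  assume t: "t \<noteq> 0"
  fix z assume z: "z \<in> {z. absK z \<le> absK t * r}"
  have "absK (z / t) = absK z / absK t" using t by (rule abs_div)
  also have "\<dots> \<le> r" using z t nonneg[of t] by (simp add: divide_le_eq mult.commute)
  finally have "z / t \<in> {y. absK y \<le> r}" by simp
  moreover have "z = t * (z / t)" using t by simp
  ultimately show "z \<in> (\<lambda>y. t * y) ` {y. absK y \<le> r}" by blast
qed

lemma scale_lt: "t \<noteq> 0 \<Longrightarrow> (\<lambda>y. t * y) ` {y. absK y < r} = {z. absK z < absK t * r}"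
proof (intro equalityI subsetI)
  assume t: "t \<noteq> 0"
  fix z assume "z \<in> (\<lambda>y. t * y) ` {y. absK y < r}"
  then show "z \<in> {z. absK z < absK t * r}"
    using nonneg[of t] t by (auto simp: mult less_le intro!: mult_strict_left_mono)
next
  assume t: "t \<noteq> 0"
  fix z assume z: "z \<in> {z. absK z < absK t * r}"
  have "absK (z / t) = absK z / absK t" using t by (rule abs_div)
  also have "\<dots> < r" using z t nonneg[of t] by (simp add: divide_less_eq mult.commute)
  finally have "z / t \<in> {y. absK y < r}" by simp
  moreover have "z = t * (z / t)" using t by simp
  ultimately show "z \<in> (\<lambda>y. t * y) ` {y. absK y < r}" by blast
qed

lemma transl_set: "{y. P (absK (y - b))} = (\<lambda>z. b + z) ` {z. P (absK z)}"
proof (intro equalityI subsetI)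
  fix y assume "y \<in> {y. P (absK (y - b))}"
  then show "y \<in> (\<lambda>z. b + z) ` {z. P (absK z)}" by (intro image_eqI[of _ _ "y - b"]) auto
qed auto

definition Bl :: "int \<Rightarrow> 'a set" where "Bl k = {y. absK y \<le> real q powi k}"

lemma Bl_meas: "Bl k \<in> sets M"
  using ball_le_meas[of "real q powi k" 0] qpos[of k] by (simp add: Bl_def)

lemma Bl_lt: "{y. absK y < real q powi k} = Bl (k - 1)"
proof (intro equalityI subsetI)
  fix y assume "y \<in> {y. absK y < real q powi k}" then show "y \<in> Bl (k - 1)"
    using lt_le by (auto simp: Bl_def)
next
  fix y assume "y \<in> Bl (k - 1)"
  moreover have "real q powi (k - 1) < real q powi k" using powi_less_iff by simp
  ultimately show "y \<in> {y. absK y < real q powi k}" by (auto simp: Bl_def)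
qed

lemma P_add: "absK x < 1 \<Longrightarrow> absK y < 1 \<Longrightarrow> absK (x + y) < 1"
  using ultra[of x y] by simp

lemma rf_disj:
  assumes "C1 \<in> residue_field absK" "C2 \<in> residue_field absK" "C1 \<noteq> C2"
  shows "C1 \<inter> C2 = {}"
proof (rule ccontr)
  assume ne: "C1 \<inter> C2 \<noteq> {}"
  obtain a where a: "C1 = (\<lambda>p. a + p) ` max_ideal absK"
    using assms(1) unfolding residue_field_def by blast
  obtain b where b: "C2 = (\<lambda>p. b + p) ` max_ideal absK"
    using assms(2) unfolding residue_field_def by blast
  from ne obtain p1 p2 where p: "absK p1 < 1" "absK p2 < 1" "a + p1 = b + p2"
    unfolding a b max_ideal_def by auto
  have "C1 \<subseteq> C2"
  proof
    fix w assume "w \<in> C1"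
    then obtain p where pp: "absK p < 1" "w = a + p" unfolding a max_ideal_def by auto
    have "w = b + ((p2 + - p1) + p)" using p(3) pp(2) by (simp add: algebra_simps)
    moreover have "absK ((p2 + - p1) + p) < 1" using p pp by (intro P_add) auto
    ultimately show "w \<in> C2" unfolding b max_ideal_def by auto
  qed
  moreover have "C2 \<subseteq> C1"
  proof
    fix w assume "w \<in> C2"
    then obtain p where pp: "absK p < 1" "w = b + p" unfolding b max_ideal_def by auto
    have "w = a + ((p1 + - p2) + p)" using p(3) pp(2) by (simp add: algebra_simps)
    moreover have "absK ((p1 + - p2) + p) < 1" using p pp by (intro P_add) auto
    ultimately show "w \<in> C1" unfolding a max_ideal_def by auto
  qed
  ultimately show False using assms(3) by blast
qed

lemma rf_union: "\<Union> (residue_field absK) = ring_of_integers absK"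
proof (intro equalityI subsetI)
  fix x assume "x \<in> \<Union> (residue_field absK)"
  then obtain a p where "absK a \<le> 1" "absK p < 1" "x = a + p"
    unfolding residue_field_def ring_of_integers_def max_ideal_def by auto
  then show "x \<in> ring_of_integers absK"
    using ultra[of a p] unfolding ring_of_integers_def by auto
next
  fix x assume x: "x \<in> ring_of_integers absK"
  have "x \<in> (\<lambda>p. x + p) ` max_ideal absK" unfolding max_ideal_def by (intro image_eqI[of _ _ 0]) auto
  moreover have "(\<lambda>p. x + p) ` max_ideal absK \<in> residue_field absK"
    using x unfolding residue_field_def by blast
  ultimately show "x \<in> \<Union> (residue_field absK)" by blast
qed

lemma Bl_step: "emeasure M (Bl k) = of_nat q * emeasure M (Bl (k - 1))"
proof -
  obtain t where t: "absK t = real q powi k" using exval by blast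
  then have t0: "t \<noteq> 0" using qpos[of k] by auto
  let ?F = "\<lambda>C. (\<lambda>y. t * y) ` C"
  have img: "?F ((\<lambda>p. a + p) ` max_ideal absK) = {z. absK (z - t * a) \<le> real q powi (k - 1)}" for a
  proof -
    have "?F ((\<lambda>p. a + p) ` max_ideal absK) = (\<lambda>z. t * a + z) ` ((\<lambda>y. t * y) ` max_ideal absK)"
      by (simp add: image_image distrib_left)
    also have "(\<lambda>y. t * y) ` max_ideal absK = Bl (k - 1)"
      unfolding max_ideal_def using scale_lt[OF t0, of 1] t Bl_lt by simp
    also have "(\<lambda>z. t * a + z) ` Bl (k - 1) = {z. absK (z - t * a) \<le> real q powi (k - 1)}"
      unfolding Bl_def using transl_set[of "\<lambda>r. r \<le> real q powi (k - 1)" "t * a"] by simp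
    finally show ?thesis .
  qed
  have meas: "?F C \<in> sets M" and em: "emeasure M (?F C) = emeasure M (Bl (k - 1))"
    if C: "C \<in> residue_field absK" for C
  proof -
    obtain a where a: "C = (\<lambda>p. a + p) ` max_ideal absK" using C unfolding residue_field_def by blast
    show "?F C \<in> sets M" unfolding a img by (rule ball_le_meas) (rule qpos)
    have "?F C = (\<lambda>z. t * a + z) ` Bl (k - 1)"
      unfolding a img Bl_def using transl_set[of "\<lambda>r. r \<le> real q powi (k - 1)" "t * a"] by simp
    then show "emeasure M (?F C) = emeasure M (Bl (k - 1))" using transl[OF Bl_meas] by simp
  qed
  have disj: "disjoint_family_on ?F (residue_field absK)"
    unfolding disjoint_family_on_def
  proof (intro ballI impI)
    fix C1 C2 assume "C1 \<in> residue_field absK" "C2 \<in> residue_field absK" "C1 \<noteq> C2"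
    then have "C1 \<inter> C2 = {}" by (rule rf_disj)
    then show "?F C1 \<inter> ?F C2 = {}" using t0 by auto
  qed
  have un: "(\<Union>C\<in>residue_field absK. ?F C) = Bl k"
  proof -
    have "(\<Union>C\<in>residue_field absK. ?F C) = (\<lambda>y. t * y) ` \<Union> (residue_field absK)" by blast
    also have "\<dots> = Bl k" unfolding rf_union ring_of_integers_def Bl_def using scale_le[OF t0, of 1] t by simp
    finally show ?thesis .
  qed
  have "emeasure M (Bl k) = (\<Sum>C\<in>residue_field absK. emeasure M (?F C))"
  proof -
    have "?F ` residue_field absK \<subseteq> sets M" using meas by blast
    then show ?thesis using sum_emeasure[of ?F "residue_field absK" M] disj finrf un by simp
  qed
  also have "\<dots> = (\<Sum>C\<in>residue_field absK. emeasure M (Bl (k - 1)))" using em by simp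
  also have "\<dots> = of_nat q * emeasure M (Bl (k - 1))" using qcard by simp
  finally show ?thesis .
qed

lemma Bl0: "emeasure M (Bl 0) = 1"
  using measO unfolding Bl_def ring_of_integers_def by simp

lemma Bl_fin: "emeasure M (Bl k) < \<infinity>"
proof (induction k rule: int_induct[where k=0])
  case base then show ?case using Bl0 by simp
next
  case (step1 i)
  have "emeasure M (Bl (i + 1)) = of_nat q * emeasure M (Bl i)" using Bl_step[of "i+1"] by simp
  then show ?case using step1 by (simp add: ennreal_of_nat_eq_real_of_nat ennreal_mult_less_top)
next
  case (step2 i)
  have "Bl (i - 1) \<subseteq> Bl i" unfolding Bl_def using powi_le_iff[of "i - 1" i] by auto
  then have "emeasure M (Bl (i - 1)) \<le> emeasure M (Bl i)" by (intro emeasure_mono Bl_meas)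
  then show ?case using step2 by (meson le_less_trans)
qed

lemma Bl_mstep: "measure M (Bl k) = real q * measure M (Bl (k - 1))"
  using Bl_step[of k] unfolding measure_def by (simp add: ennreal_of_nat_eq_real_of_nat enn2real_mult)

lemma Bl_measure: "measure M (Bl k) = real q powi k"
proof (induction k rule: int_induct[where k=0])
  case base then show ?case using Bl0 by (simp add: measure_def)
next
  case (step1 i)
  then show ?case using Bl_mstep[of "i+1"] q_gt1 by (simp add: power_int_add)
next
  case (step2 i)
  then have "real q * measure M (Bl (i - 1)) = real q powi i" using Bl_mstep[of i] by simp
  moreover have "real q powi i = real q * real q powi (i - 1)" using q_gt1
    by (metis add.commute diff_add_cancel of_nat_0_less_iff order_less_imp_not_eq2 power_int_add_1' zero_less_one_class.zero_less_one less_trans)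
  ultimately show ?case using q_gt1 by simp
qed


lemma Bc_eq: "{y. absK (y - b) \<le> real q powi k} = (\<lambda>z. b + z) ` Bl k"
  unfolding Bl_def by (rule transl_set)

lemma Bc_meas: "{y. absK (y - b) \<le> real q powi k} \<in> sets M"
  by (rule ball_le_meas) (rule qpos)

lemma Bc_em: "emeasure M {y. absK (y - b) \<le> real q powi k} = emeasure M (Bl k)"
  unfolding Bc_eq by (rule transl[OF Bl_meas])

lemma Bc_fm: "{y. absK (y - b) \<le> real q powi k} \<in> fmeasurable M"
  using Bc_meas Bc_em Bl_fin unfolding fmeasurable_def by simp

lemma Bc_measure: "measure M {y. absK (y - b) \<le> real q powi k} = real q powi k"
  using Bc_em Bl_measure unfolding measure_def by simp

lemma sing_measure: "measure M {b} = 0"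
proof (rule ccontr)
  assume "measure M {b} \<noteq> 0"
  then have pos: "measure M {b} > 0" using measure_nonneg[of M "{b}"] by linarith
  obtain n where n: "(1 / real q) ^ n < measure M {b}"
    using real_arch_pow_inv[OF pos, of "1 / real q"] q_gt1 by auto
  have "measure M {b} \<le> measure M {y. absK (y - b) \<le> real q powi (- int n)}"
    by (rule measure_mono_fmeasurable[OF _ sing_meas Bc_fm]) (use qpos[of "- int n"] in simp)
  also have "\<dots> = (1 / real q) ^ n" unfolding Bc_measure by (simp add: power_int_minus power_one_over inverse_eq_divide)
  finally show False using n by simp
qed

lemma sing_fm: "{b} \<in> fmeasurable M"
proof -
  have "{b} \<subseteq> {y. absK (y - b) \<le> real q powi 0}" by simp
  then have "emeasure M {b} \<le> emeasure M {y. absK (y - b) \<le> real q powi 0}"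
    by (intro emeasure_mono Bc_meas)
  then show ?thesis using Bc_fm[of b 0] sing_meas unfolding fmeasurable_def
    by (auto intro: le_less_trans)
qed

lemma sph0_eq: "{y. absK y = real q powi k} = Bl k - Bl (k - 1)"
proof (intro equalityI subsetI)
  fix y assume "y \<in> {y. absK y = real q powi k}"
  then show "y \<in> Bl k - Bl (k - 1)" using powi_le_iff[of k "k - 1"] by (auto simp: Bl_def)
next
  fix y assume "y \<in> Bl k - Bl (k - 1)"
  then show "y \<in> {y. absK y = real q powi k}" using lt_le[of y k] by (force simp: Bl_def)
qed

lemma sph_eq: "{y. absK (y - b) = real q powi k} = (\<lambda>z. b + z) ` {y. absK y = real q powi k}"
  by (rule transl_set)

lemma sph_meas: "{y. absK (y - b) = real q powi k} \<in> sets M"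
  by (rule sphere_meas) (rule qpos)

lemma sph_fm: "{y. absK (y - b) = real q powi k} \<in> fmeasurable M"
proof -
  have "{y. absK (y - b) = real q powi k} \<subseteq> {y. absK (y - b) \<le> real q powi k}" by auto
  then have "emeasure M {y. absK (y - b) = real q powi k} \<le> emeasure M {y. absK (y - b) \<le> real q powi k}"
    by (intro emeasure_mono Bc_meas)
  then show ?thesis using Bc_fm[of b k] sph_meas unfolding fmeasurable_def
    by (auto intro: le_less_trans)
qed

lemma sph_measure: "measure M {y. absK (y - b) = real q powi k} = real q powi k * (1 - 1 / real q)"
proof -
  have "Bl (k - 1) \<subseteq> Bl k" unfolding Bl_def using powi_le_iff[of "k - 1" k] by auto
  then have "measure M {y. absK y = real q powi k} = real q powi k - real q powi (k - 1)"
    unfolding sph0_eq using Bl_fin[of k] Bl_meas by (subst measure_Diff) (auto simp: Bl_measure)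
  also have "real q powi (k - 1) = real q powi k / real q" using q_gt1 by (simp add: power_int_diff)
  finally have a: "measure M {y. absK y = real q powi k} = real q powi k * (1 - 1 / real q)"
    by (simp add: algebra_simps)
  have "emeasure M {y. absK (y - b) = real q powi k} = emeasure M {y. absK y = real q powi k}"
    unfolding sph_eq using sph_meas[of 0 k] by (intro transl) simp
  then show ?thesis using a unfolding measure_def by simp
qed


lemma R:
  fixes g :: "real \<Rightarrow> real"
  assumes summ: "summable (\<lambda>i. \<bar>g (real q powi (n - 1 - int i))\<bar> * real q powi (n - 1 - int i))"
  shows "set_integrable M {y. absK (y - b) < real q powi n} (\<lambda>y. g (absK (y - b)))
    \<and> (LINT y:{y. absK (y - b) < real q powi n}|M. g (absK (y - b)))
       = (\<Sum>i. g (real q powi (n - 1 - int i)) * (real q powi (n - 1 - int i) * (1 - 1 / real q)))"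
proof -
  define E where "E = {y. absK (y - b) < real q powi n}"
  define A where "A i = (case i of 0 \<Rightarrow> {b} | Suc j \<Rightarrow> {y. absK (y - b) = real q powi (n - 1 - int j)})" for i
  define c where "c i = (case i of 0 \<Rightarrow> g 0 | Suc j \<Rightarrow> g (real q powi (n - 1 - int j)))" for i
  define f where "f y = indicator E y *\<^sub>R g (absK (y - b))" for y
  have disj: "disjoint_family A"
    unfolding disjoint_family_on_def
  proof (intro ballI impI)
    fix i j :: nat assume ij: "i \<noteq> j"
    show "A i \<inter> A j = {}"
    proof (cases i; cases j)
      fix i' j' assume "i = Suc i'" "j = Suc j'"
      then have "n - 1 - int i' \<noteq> n - 1 - int j'" using ij by simp
      then have "real q powi (n - 1 - int i') \<noteq> real q powi (n - 1 - int j')"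
        using powi_less_iff[of "n - 1 - int i'" "n - 1 - int j'"] powi_less_iff[of "n - 1 - int j'" "n - 1 - int i'"]
        by (metis linorder_neqE_linordered_idom order_less_irrefl)
      then show ?thesis using \<open>i = Suc i'\<close> \<open>j = Suc j'\<close> by (auto simp: A_def)
    qed (use ij qpos q_gt1 in \<open>auto simp: A_def\<close>)
  qed
  have fm: "A i \<in> fmeasurable M" for i
    by (cases i) (auto simp: A_def sing_fm sph_fm)
  have mA: "measure M (A i) = (case i of 0 \<Rightarrow> 0 | Suc j \<Rightarrow> real q powi (n - 1 - int j) * (1 - 1 / real q))" for i
    by (cases i) (auto simp: A_def sing_measure sph_measure)
  have summ2: "summable (\<lambda>i. \<bar>c i\<bar> * measure M (A i))"
  proof -
    have "summable (\<lambda>j. (\<bar>g (real q powi (n - 1 - int j))\<bar> * real q powi (n - 1 - int j)) * (1 - 1 / real q))"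
      using summ by (rule summable_mult2)
    then have "summable (\<lambda>j. \<bar>c (Suc j)\<bar> * measure M (A (Suc j)))"
      by (simp add: c_def mA mult.assoc)
    then show ?thesis using summable_Suc_iff[of "\<lambda>i. \<bar>c i\<bar> * measure M (A i)"] by simp
  qed
  have inA: "f y = c i" if "y \<in> A i" for i y
  proof (cases i)
    case 0 then show ?thesis using that qpos[of n] by (simp add: A_def c_def f_def E_def)
  next
    case (Suc j)
    then have "absK (y - b) = real q powi (n - 1 - int j)" using that by (simp add: A_def)
    moreover have "real q powi (n - 1 - int j) < real q powi n" using powi_less_iff by simp
    ultimately show ?thesis using Suc by (simp add: c_def f_def E_def)
  qed
  have out: "f y = 0" if "\<And>i. y \<notin> A i" for y
  proof (cases "y \<in> E")
    case True
    have "y \<noteq> b" using that[of 0] by (simp add: A_def)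
    then obtain j where j: "absK (y - b) = real q powi j" using disc[of "y - b"] by auto
    then have "j < n" using True powi_less_iff by (simp add: E_def)
    then have "y \<in> A (Suc (nat (n - 1 - j)))" using j by (simp add: A_def)
    then show ?thesis using that by blast
  next
    case False then show ?thesis by (simp add: f_def)
  qed
  have main: "integrable M f \<and> integral\<^sup>L M f = (\<Sum>i. c i * measure M (A i))"
    by (rule step_int[OF disj fm summ2 inA out])
  have sc: "summable (\<lambda>i. c i * measure M (A i))"
  proof -
    have "(\<lambda>i. norm (c i * measure M (A i))) = (\<lambda>i. \<bar>c i\<bar> * measure M (A i))"
      by (simp add: abs_mult)
    then show ?thesis using summ2 summable_norm_cancel[of "\<lambda>i. c i * measure M (A i)"] by simp
  qed
  have "(\<Sum>i. c i * measure M (A i)) = (\<Sum>j. c (Suc j) * measure M (A (Suc j)))"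
    using suminf_split_head[OF sc] by (simp add: mA)
  also have "\<dots> = (\<Sum>i. g (real q powi (n - 1 - int i)) * (real q powi (n - 1 - int i) * (1 - 1 / real q)))"
    by (simp add: c_def mA)
  finally show ?thesis using main unfolding set_integrable_def set_lebesgue_integral_def f_def E_def
    by simp
qed


lemma decomp:
  fixes \<phi> :: "real \<Rightarrow> real" and u :: "real \<Rightarrow> real"
  assumes x: "x \<noteq> 0"
  shows "indicator {y. absK y \<le> absK x} y * ((\<phi> (absK (x - y)) - \<phi> (absK y)) * u (absK y))
    = indicator {y. absK y < absK x} y * ((\<phi> (absK x) - \<phi> (absK y)) * u (absK y))
      + u (absK x) * (indicator {y. absK (y - x) < absK x} y * (\<phi> (absK (y - x)) - \<phi> (absK x)))"
proof -
  consider "absK y < absK x" | "absK y = absK x" | "absK y > absK x" by linarith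
  then show ?thesis
  proof cases
    case 1
    have "absK (x - y) = absK (x + - y)" by simp
    also have "\<dots> = absK x" using 1 by (intro strict) simp
    finally have a: "absK (x - y) = absK x" .
    then have "\<not> absK (y - x) < absK x" using abs_sub[of x y] by simp
    then show ?thesis using 1 a by simp
  next
    case 2
    show ?thesis
    proof (cases "absK (y - x) < absK x")
      case True then show ?thesis using 2 abs_sub[of x y] by (simp add: algebra_simps)
    next
      case False
      have "absK (x - y) \<le> max (absK x) (absK (- y))" using ultra[of x "- y"] by simp
      then have "absK (x - y) = absK x" using False 2 abs_sub[of x y] by simp
      then show ?thesis using 2 False by simp
    qed
  next
    case 3
    have "absK (y - x) = absK (y + - x)" by simp
    also have "\<dots> = absK y" using 3 by (intro strict) simp
    finally have "absK (y - x) = absK y" .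
    then show ?thesis using 3 by simp
  qed
qed

lemma general:
  fixes \<phi> :: "real \<Rightarrow> real" and u :: "real \<Rightarrow> real"
  assumes x: "x \<noteq> 0" and n: "absK x = real q powi n"
    and S1: "summable (\<lambda>i. \<bar>(\<phi> (absK x) - \<phi> (real q powi (n - 1 - int i))) * u (real q powi (n - 1 - int i))\<bar>
                 * real q powi (n - 1 - int i))"
    and S2: "summable (\<lambda>i. \<bar>\<phi> (real q powi (n - 1 - int i)) - \<phi> (absK x)\<bar> * real q powi (n - 1 - int i))"
  shows "set_integrable M {y. absK y \<le> absK x} (\<lambda>y. (\<phi> (absK (x - y)) - \<phi> (absK y)) * u (absK y))
    \<and> set_integrable M {y. absK y < absK x} (\<lambda>y. (\<phi> (absK x) - \<phi> (absK y)) * u (absK y))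
    \<and> (LINT y:{y. absK y \<le> absK x}|M. (\<phi> (absK (x - y)) - \<phi> (absK y)) * u (absK y))
      = (LINT y:{y. absK y < absK x}|M. (\<phi> (absK x) - \<phi> (absK y)) * u (absK y))
        + u (absK x) * (\<Sum>i. (\<phi> (real q powi (n - 1 - int i)) - \<phi> (absK x)) * (real q powi (n - 1 - int i) * (1 - 1 / real q)))"
proof -
  have R1: "set_integrable M {y. absK (y - 0) < real q powi n} (\<lambda>y. (\<lambda>t. (\<phi> (absK x) - \<phi> t) * u t) (absK (y - 0)))"
    using R[of "\<lambda>t. (\<phi> (absK x) - \<phi> t) * u t" n 0] S1 by blast
  then have I1: "set_integrable M {y. absK y < absK x} (\<lambda>y. (\<phi> (absK x) - \<phi> (absK y)) * u (absK y))"
    using n by simp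
  have R2: "set_integrable M {y. absK (y - x) < real q powi n} (\<lambda>y. (\<lambda>t. \<phi> t - \<phi> (absK x)) (absK (y - x)))
    \<and> (LINT y:{y. absK (y - x) < real q powi n}|M. (\<lambda>t. \<phi> t - \<phi> (absK x)) (absK (y - x)))
       = (\<Sum>i. (\<phi> (real q powi (n - 1 - int i)) - \<phi> (absK x)) * (real q powi (n - 1 - int i) * (1 - 1 / real q)))"
    by (rule R) (use S2 in simp)
  then have I2: "set_integrable M {y. absK (y - x) < absK x} (\<lambda>y. \<phi> (absK (y - x)) - \<phi> (absK x))"
    and V2: "(LINT y:{y. absK (y - x) < absK x}|M. \<phi> (absK (y - x)) - \<phi> (absK x))
       = (\<Sum>i. (\<phi> (real q powi (n - 1 - int i)) - \<phi> (absK x)) * (real q powi (n - 1 - int i) * (1 - 1 / real q)))"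
    using n by simp_all
  define f1 where "f1 y = indicator {y. absK y < absK x} y * ((\<phi> (absK x) - \<phi> (absK y)) * u (absK y))" for y
  define f2 where "f2 y = indicator {y. absK (y - x) < absK x} y * (\<phi> (absK (y - x)) - \<phi> (absK x))" for y
  have i1: "integrable M f1" using I1 unfolding set_integrable_def f1_def by simp
  have i2: "integrable M f2" using I2 unfolding set_integrable_def f2_def by simp
  have eq: "(\<lambda>y. indicator {y. absK y \<le> absK x} y *\<^sub>R ((\<phi> (absK (x - y)) - \<phi> (absK y)) * u (absK y)))
      = (\<lambda>y. f1 y + u (absK x) * f2 y)"
    using decomp[OF x] unfolding f1_def f2_def by simp
  have "integrable M (\<lambda>y. f1 y + u (absK x) * f2 y)" using i1 i2 by simp
  moreover have "integral\<^sup>L M (\<lambda>y. f1 y + u (absK x) * f2 y) = integral\<^sup>L M f1 + u (absK x) * integral\<^sup>L M f2"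
    using i1 i2 by simp
  moreover have "integral\<^sup>L M f2 = (\<Sum>i. (\<phi> (real q powi (n - 1 - int i)) - \<phi> (absK x)) * (real q powi (n - 1 - int i) * (1 - 1 / real q)))"
    using V2 unfolding set_lebesgue_integral_def f2_def by simp
  moreover have "integral\<^sup>L M f1 = (LINT y:{y. absK y < absK x}|M. (\<phi> (absK x) - \<phi> (absK y)) * u (absK y))"
    unfolding set_lebesgue_integral_def f1_def by simp
  ultimately show ?thesis using I1 unfolding set_integrable_def set_lebesgue_integral_def eq by simp
qed

end


lemma ti_eq: "(Q::real) > 0 \<Longrightarrow> Q powi (n - 1 - int i) = Q powi n * (1/Q)^Suc i"
proof -
  assume Q: "Q > 0"
  have e: "n - 1 - int i = n - int (Suc i)" by simp
  have "Q powi (n - int (Suc i)) = Q powi n / Q powi (int (Suc i))" using Q by (intro power_int_diff) simp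
  also have "Q powi (int (Suc i)) = Q ^ Suc i" by (rule power_int_of_nat)
  also have "Q powi n / Q ^ Suc i = Q powi n * (1/Q)^Suc i" by (simp add: power_one_over)
  finally have "Q powi (n - int (Suc i)) = Q powi n * (1/Q)^Suc i" .
  then show ?thesis by (simp only: e)
qed

lemma powr_part1:
  fixes Q X \<alpha> :: real assumes Q: "Q > 0" and X: "X > 0"
  shows "(X*(1/Q)^k) powr (\<alpha>-1) * (X*(1/Q)^k) = X powr \<alpha> * (Q powr (-\<alpha>))^k"
proof -
  have T: "X*(1/Q)^k > 0" using Q X by simp
  have "(X*(1/Q)^k) powr (\<alpha>-1) * (X*(1/Q)^k) = (X*(1/Q)^k) powr \<alpha>"
    using powr_mult_base[of "X*(1/Q)^k" "\<alpha> - 1"] T by (simp add: mult.commute)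
  also have "\<dots> = X powr \<alpha> * ((1/Q)^k) powr \<alpha>" using Q X by (simp add: powr_mult)
  also have "((1/Q)^k) powr \<alpha> = ((1/Q) powr (real k)) powr \<alpha>" using Q by (simp add: powr_realpow)
  also have "\<dots> = (1/Q) powr (real k * \<alpha>)" by (simp add: powr_powr)
  also have "\<dots> = ((1/Q) powr \<alpha>)^k" using Q by (simp add: powr_power)
  also have "(1/Q) powr \<alpha> = Q powr (-\<alpha>)" using Q by (simp add: powr_divide powr_minus_divide)
  finally show ?thesis .
qed

lemma powr_part2:
  fixes Q X \<alpha> :: real assumes Q: "Q > 0" and X: "X > 0"
  shows "X powr (\<alpha>-1) * (X*(1/Q)^k) = X powr \<alpha> * (1/Q)^k"
proof -
  have "X powr (\<alpha>-1) * X = X powr \<alpha>" using powr_mult_base[of X "\<alpha> - 1"] X by (simp add: mult.commute)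
  then show ?thesis by (metis mult.assoc)
qed

lemma alg1: fixes A P B X a :: real assumes "A \<noteq> 0" "P \<noteq> 0" "B \<noteq> 0"
  shows "A / P * (X * (a * P / (A * B)) * B) = a * X"
  using assms by (simp add: field_simps)

lemma geo_suc: "\<bar>z::real\<bar> < 1 \<Longrightarrow> (\<lambda>i. z ^ Suc i) sums (z / (1 - z))"
proof -
  assume "\<bar>z\<bar> < 1"
  then have "(\<lambda>i. z ^ i) sums (1 / (1 - z))" by (intro geometric_sums) simp
  then have "(\<lambda>i. z * z ^ i) sums (z * (1 / (1 - z)))" by (rule sums_mult)
  then show ?thesis by simp
qed

lemma powr_sum:
  fixes Q X \<alpha> :: real
  assumes Q: "Q > 1" and X: "X > 0" and \<alpha>: "\<alpha> > 0" "\<alpha> \<noteq> 1"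
  defines "t \<equiv> \<lambda>i::nat. X * (1/Q)^Suc i"
  shows "summable (\<lambda>i. \<bar>t i powr (\<alpha>-1) - X powr (\<alpha>-1)\<bar> * t i)"
    and "(1 - Q powr (-\<alpha>)) / (1 - Q powr (\<alpha>-1)) *
         (\<Sum>i. (t i powr (\<alpha>-1) - X powr (\<alpha>-1)) * (t i * (1 - 1/Q))) = Q powr (-\<alpha>) * X powr \<alpha>"
proof -
  define a where "a = Q powr (-\<alpha>)"
  define r where "r = 1 / Q"
  define p where "p = Q powr (\<alpha> - 1)"
  have Q0: "Q > 0" using Q by simp
  have a: "0 < a" "a < 1" unfolding a_def using Q \<alpha> by (auto simp: powr_less_one)
  have r: "0 < r" "r < 1" unfolding r_def using Q by auto
  have p: "p \<noteq> 1" unfolding p_def using Q \<alpha> by (auto)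
  have rap: "r = a * p"
  proof -
    have "Q powr (\<alpha> - 1) = Q powr \<alpha> / Q" using Q0 by (simp add: powr_diff)
    moreover have "Q powr \<alpha> > 0" using Q0 by simp
    ultimately show ?thesis unfolding r_def a_def p_def using Q0 by (simp add: powr_minus_divide field_simps)
  qed
  have trm: "(t i powr (\<alpha>-1) - X powr (\<alpha>-1)) * t i = X powr \<alpha> * (a ^ Suc i - r ^ Suc i)" for i
    unfolding t_def a_def r_def left_diff_distrib powr_part1[OF Q0 X, where \<alpha>=\<alpha> and k="Suc i"]
      powr_part2[OF Q0 X, where \<alpha>=\<alpha> and k="Suc i"] right_diff_distrib ..
  have sa: "(\<lambda>i. a ^ Suc i) sums (a / (1 - a))" using a by (intro geo_suc) simp
  have sr: "(\<lambda>i. r ^ Suc i) sums (r / (1 - r))" using r by (intro geo_suc) simp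
  have s: "(\<lambda>i. X powr \<alpha> * (a ^ Suc i - r ^ Suc i) * (1 - r)) sums (X powr \<alpha> * (a / (1 - a) - r / (1 - r)) * (1 - r))"
    by (intro sums_mult sums_mult2 sums_diff sa sr)
  have sabs: "summable (\<lambda>i. X powr \<alpha> * (a ^ Suc i + r ^ Suc i))"
    by (intro summable_mult sums_summable[OF sums_add[OF sa sr]])
  show "summable (\<lambda>i. \<bar>t i powr (\<alpha>-1) - X powr (\<alpha>-1)\<bar> * t i)"
  proof (rule summable_comparison_test[OF _ sabs])
    show "\<exists>N. \<forall>n\<ge>N. norm (\<bar>t n powr (\<alpha> - 1) - X powr (\<alpha> - 1)\<bar> * t n) \<le> X powr \<alpha> * (a ^ Suc n + r ^ Suc n)"
    proof (intro exI allI impI)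
      fix n :: nat
      have tn: "t n > 0" unfolding t_def using X Q by simp
      have "norm (\<bar>t n powr (\<alpha> - 1) - X powr (\<alpha> - 1)\<bar> * t n) = \<bar>(t n powr (\<alpha> - 1) - X powr (\<alpha> - 1)) * t n\<bar>"
        using tn by (simp add: abs_mult)
      also have "\<dots> = X powr \<alpha> * \<bar>a ^ Suc n - r ^ Suc n\<bar>" unfolding trm by (simp add: abs_mult)
      also have "\<dots> \<le> X powr \<alpha> * (a ^ Suc n + r ^ Suc n)"
      proof (rule mult_left_mono)
        have "0 < a ^ Suc n" "0 < r ^ Suc n" using a r by (simp_all only: zero_less_power)
        then show "\<bar>a ^ Suc n - r ^ Suc n\<bar> \<le> a ^ Suc n + r ^ Suc n" by linarith
      qed simp
      finally show "norm (\<bar>t n powr (\<alpha> - 1) - X powr (\<alpha> - 1)\<bar> * t n) \<le> X powr \<alpha> * (a ^ Suc n + r ^ Suc n)" .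
    qed
  qed
  have "(\<Sum>i. (t i powr (\<alpha>-1) - X powr (\<alpha>-1)) * (t i * (1 - 1/Q)))
      = (\<Sum>i. X powr \<alpha> * (a ^ Suc i - r ^ Suc i) * (1 - r))"
  proof (rule suminf_cong)
    fix i
    have "(t i powr (\<alpha>-1) - X powr (\<alpha>-1)) * (t i * (1 - 1/Q)) = ((t i powr (\<alpha>-1) - X powr (\<alpha>-1)) * t i) * (1 - r)"
      unfolding r_def by (simp only: mult.assoc)
    then show "(t i powr (\<alpha>-1) - X powr (\<alpha>-1)) * (t i * (1 - 1/Q)) = X powr \<alpha> * (a ^ Suc i - r ^ Suc i) * (1 - r)"
      unfolding trm .
  qed
  also have "\<dots> = X powr \<alpha> * (a / (1 - a) - r / (1 - r)) * (1 - r)" using s by (simp add: sums_iff)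
  finally have sum: "(\<Sum>i. (t i powr (\<alpha>-1) - X powr (\<alpha>-1)) * (t i * (1 - 1/Q))) = X powr \<alpha> * (a / (1 - a) - r / (1 - r)) * (1 - r)" .
  have "(1 - a) / (1 - p) * (X powr \<alpha> * (a / (1 - a) - r / (1 - r)) * (1 - r)) = a * X powr \<alpha>"
  proof -
    have "1 - a \<noteq> 0" "1 - r \<noteq> 0" "1 - p \<noteq> 0" using a r p by auto
    then have nz: "1 - a \<noteq> 0" "1 - a * p \<noteq> 0" "1 - p \<noteq> 0" unfolding rap by auto
    have k: "a / (1 - a) - a * p / (1 - a * p) = a * (1 - p) / ((1 - a) * (1 - a * p))"
      using nz by (simp add: field_simps)
    have "(1 - a) / (1 - p) * (X powr \<alpha> * (a * (1 - p) / ((1 - a) * (1 - a * p))) * (1 - a * p)) = a * X powr \<alpha>"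
      using alg1[OF nz(1) nz(3) nz(2)] .
    then show ?thesis unfolding rap k .
  qed
  then show "(1 - Q powr (-\<alpha>)) / (1 - Q powr (\<alpha>-1)) *
         (\<Sum>i. (t i powr (\<alpha>-1) - X powr (\<alpha>-1)) * (t i * (1 - 1/Q))) = Q powr (-\<alpha>) * X powr \<alpha>"
    unfolding sum by (simp add: a_def p_def)
qed

lemma ln_sum:
  fixes Q X :: real
  assumes Q: "Q > 1" and X: "X > 0"
  defines "t \<equiv> \<lambda>i::nat. X * (1/Q)^Suc i"
  shows "summable (\<lambda>i. \<bar>ln (t i) - ln X\<bar> * t i)"
    and "(1 - Q) / (Q * ln Q) * (\<Sum>i. (ln (t i) - ln X) * (t i * (1 - 1/Q))) = Q powr (-1) * X"
proof -
  define r where "r = 1 / Q"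
  have r: "0 < r" "r < 1" unfolding r_def using Q by auto
  have lnQ: "ln Q > 0" using Q by simp
  have lt: "ln (t i) - ln X = - (real (Suc i) * ln Q)" for i
    unfolding t_def using Q X by (simp add: ln_mult ln_realpow ln_div algebra_simps)
  have d: "(\<lambda>i. real (Suc i) * r ^ i) sums (1 / (1 - r)^2)"
    using geometric_deriv_sums[of r] r by simp
  have d2: "(\<lambda>i. (ln Q * X * r) * (real (Suc i) * r ^ i)) sums ((ln Q * X * r) * (1 / (1 - r)^2))"
    by (rule sums_mult[OF d])
  have eqa: "\<bar>ln (t i) - ln X\<bar> * t i = (ln Q * X * r) * (real (Suc i) * r ^ i)" for i
    unfolding lt using lnQ X r unfolding t_def r_def by (simp add: abs_mult)
  show "summable (\<lambda>i. \<bar>ln (t i) - ln X\<bar> * t i)" unfolding eqa using d2 by (simp add: sums_iff)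
  have eqb: "(ln (t i) - ln X) * (t i * (1 - 1/Q)) = - (1 - r) * ((ln Q * X * r) * (real (Suc i) * r ^ i))" for i
    unfolding lt unfolding t_def unfolding r_def[symmetric] by (simp add: algebra_simps)
  have "(\<Sum>i. (ln (t i) - ln X) * (t i * (1 - 1/Q))) = - (1 - r) * ((ln Q * X * r) * (1 / (1 - r)^2))"
    unfolding eqb using sums_mult[OF d2, of "- (1 - r)"] by (simp add: sums_iff)
  moreover have "(1 - Q) / (Q * ln Q) * (- (1 - r) * ((ln Q * X * r) * (1 / (1 - r)^2))) = Q powr (-1) * X"
  proof -
    have "1 - r \<noteq> 0" "Q \<noteq> 0" "ln Q \<noteq> 0" "Q - 1 \<noteq> 0" using r Q lnQ by auto
    have e0: "- (1 - r) * ((ln Q * X * r) * (1 / (1 - r)^2)) = - ln Q * X * r * ((1 - r) / (1 - r)^2)"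
      by (simp add: divide_inverse algebra_simps)
    have h: "(1 - r) / (1 - r)^2 = 1 / (1 - r)" using \<open>1 - r \<noteq> 0\<close> by (simp add: power2_eq_square)
    have e1: "- (1 - r) * ((ln Q * X * r) * (1 / (1 - r)^2)) = - ln Q * X * (r / (1 - r))"
      unfolding e0 h by simp
    have e2: "r / (1 - r) = 1 / (Q - 1)" unfolding r_def using Q by (simp add: field_simps)
    have e3: "Q powr (-1) = 1 / Q" using Q by (simp add: powr_minus_divide)
    have "(1 - Q) / (Q * ln Q) * (- ln Q * X * (1 / (Q - 1))) = 1 / Q * X"
      using \<open>Q - 1 \<noteq> 0\<close> \<open>Q \<noteq> 0\<close> \<open>ln Q \<noteq> 0\<close> by (simp add: field_simps)
    then show ?thesis unfolding e1 e2 e3 .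
  qed
  ultimately show "(1 - Q) / (Q * ln Q) * (\<Sum>i. (ln (t i) - ln X) * (t i * (1 - 1/Q))) = Q powr (-1) * X"
    by simp
qed


lemma sum_int_shift:
  fixes h :: "int \<Rightarrow> real" assumes nn: "\<And>k. h k \<ge> 0" and s: "h summable_on {..m}"
  shows "summable (\<lambda>i::nat. h (p - int i))"
proof -
  have "h summable_on ({..m} \<union> {m<..p})" by (intro summable_on_Un_disjoint s summable_on_finite) auto
  then have hp: "h summable_on {..p}" by (rule summable_on_subset_banach) auto
  have bij: "bij_betw (\<lambda>i::nat. p - int i) UNIV {..p}"
    unfolding bij_betw_def
  proof
    show "inj (\<lambda>i::nat. p - int i)" by (rule injI) simp
    show "range (\<lambda>i::nat. p - int i) = {..p}"
    proof (intro equalityI subsetI)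
      fix k assume "k \<in> {..p}"
      then have "k = p - int (nat (p - k))" by simp
      then show "k \<in> range (\<lambda>i::nat. p - int i)" by blast
    qed auto
  qed
  have "(\<lambda>i. h (p - int i)) summable_on UNIV" using summable_on_reindex_bij_betw[OF bij, of h] hp by blast
  then show ?thesis using summable_on_UNIV_nonneg_real_iff[of "\<lambda>i. h (p - int i)"] nn by simp
qed

lemma shift_start:
  fixes F :: "int \<Rightarrow> real"
  assumes s: "summable (\<lambda>i::nat. F (p - int i))" and pp: "p \<le> p'"
  shows "summable (\<lambda>i::nat. F (p' - int i))"
proof -
  define d where "d = nat (p' - p)"
  have "(\<lambda>i. F (p' - int (i + d))) = (\<lambda>i. F (p - int i))" unfolding d_def using pp by auto
  then have "summable (\<lambda>i. (\<lambda>i. F (p' - int i)) (i + d))" using s by simp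
  then show ?thesis using summable_iff_shift[of "\<lambda>i. F (p' - int i)" d] by blast
qed



context nlf begin

lemma case_ne1:
  fixes \<alpha> :: real and u :: "real \<Rightarrow> real"
  assumes \<alpha>: "\<alpha> > 0" "\<alpha> \<noteq> 1"
    and hs: "(\<lambda>k::int. max (real q powr real_of_int k) (real q powr (\<alpha> * real_of_int k)) * \<bar>u (real q powi k)\<bar>) summable_on {..m}"
    and x: "x \<noteq> 0"
  shows "set_integrable M {y. absK y \<le> absK x} (riesz_kernel absK \<alpha> u x)
     \<and> set_integrable M {y. absK y < absK x} (\<lambda>y. (absK x powr (\<alpha> - 1) - absK y powr (\<alpha> - 1)) * u (absK y))
     \<and> riesz_pot absK M q \<alpha> u x = real q powr (-\<alpha>) * absK x powr \<alpha> * u (absK x)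
        + (1 - real q powr (-\<alpha>)) / (1 - real q powr (\<alpha> - 1)) *
          (LINT y : {y. absK y < absK x} | M. (absK x powr (\<alpha> - 1) - absK y powr (\<alpha> - 1)) * u (absK y))"
proof -
  obtain n where n: "absK x = real q powi n" using disc[OF x] by blast
  define X where "X = absK x"
  have X0: "X > 0" using x nonneg[of x] by (auto simp: X_def less_le)
  have Q0: "real q > 0" using q_gt1 by simp
  have tq: "real q powi (n - 1 - int i) = X * (1 / real q) ^ Suc i" for i
    unfolding X_def n by (rule ti_eq[OF Q0])
  have S2: "summable (\<lambda>i. \<bar>(real q powi (n - 1 - int i)) powr (\<alpha> - 1) - (absK x) powr (\<alpha> - 1)\<bar> * real q powi (n - 1 - int i))"
    unfolding tq X_def[symmetric] using powr_sum(1)[OF q_gt1 X0 \<alpha>] by simp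
  define h where "h = (\<lambda>k::int. max (real q powr real_of_int k) (real q powr (\<alpha> * real_of_int k)) * \<bar>u (real q powi k)\<bar>)"
  have hnn: "h k \<ge> 0" for k unfolding h_def by (intro mult_nonneg_nonneg) (auto simp: le_max_iff_disj)
  have hs': "h summable_on {..m}" using hs unfolding h_def .
  have hsum: "summable (\<lambda>i::nat. h (n - 1 - int i))" by (rule sum_int_shift[OF hnn hs'])
  have S1: "summable (\<lambda>i. \<bar>((absK x) powr (\<alpha> - 1) - (real q powi (n - 1 - int i)) powr (\<alpha> - 1)) * u (real q powi (n - 1 - int i))\<bar>
                 * real q powi (n - 1 - int i))"
  proof (rule summable_comparison_test[OF _ summable_mult[OF hsum, of "X powr (\<alpha> - 1) + 1"]])
    show "\<exists>N. \<forall>i\<ge>N. norm (\<bar>((absK x) powr (\<alpha> - 1) - (real q powi (n - 1 - int i)) powr (\<alpha> - 1)) * u (real q powi (n - 1 - int i))\<bar>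
                 * real q powi (n - 1 - int i)) \<le> (X powr (\<alpha> - 1) + 1) * h (n - 1 - int i)"
    proof (intro exI allI impI)
      fix i :: nat
      define k where "k = n - 1 - int i"
      define t where "t = real q powi k"
      have t: "real q powr real_of_int k = t" unfolding t_def using Q0 by (simp add: powr_real_of_int')
      have t0: "t > 0" unfolding t_def using qpos by simp
      have ta: "real q powr (\<alpha> * real_of_int k) = t powr \<alpha>" unfolding t[symmetric] by (simp add: powr_powr mult.commute)
      have tt: "t powr (\<alpha> - 1) * t = t powr \<alpha>" using powr_mult_base[of t "\<alpha> - 1"] t0 by (simp add: mult.commute)
      have Xp: "X powr (\<alpha> - 1) \<ge> 0" by simp
      have "norm (\<bar>(X powr (\<alpha> - 1) - t powr (\<alpha> - 1)) * u t\<bar> * t) = \<bar>X powr (\<alpha> - 1) * t - t powr (\<alpha> - 1) * t\<bar> * \<bar>u t\<bar>"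
      proof -
        have e: "\<bar>X powr (\<alpha> - 1) * t - t powr (\<alpha> - 1) * t\<bar> = \<bar>X powr (\<alpha> - 1) - t powr (\<alpha> - 1)\<bar> * t"
          by (metis abs_mult abs_of_pos left_diff_distrib t0)
        show ?thesis unfolding e using t0 by (simp add: abs_mult)
      qed
      also have "\<dots> \<le> (X powr (\<alpha> - 1) * t + t powr \<alpha>) * \<bar>u t\<bar>"
      proof (rule mult_right_mono)
        have "X powr (\<alpha> - 1) * t \<ge> 0" "t powr (\<alpha> - 1) * t \<ge> 0" using t0 by simp_all
        then show "\<bar>X powr (\<alpha> - 1) * t - t powr (\<alpha> - 1) * t\<bar> \<le> X powr (\<alpha> - 1) * t + t powr \<alpha>"
          unfolding tt[symmetric] by linarith
      qed simp
      also have "\<dots> \<le> (X powr (\<alpha> - 1) + 1) * max t (t powr \<alpha>) * \<bar>u t\<bar>"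
      proof (rule mult_right_mono)
        have "X powr (\<alpha> - 1) * t \<le> X powr (\<alpha> - 1) * max t (t powr \<alpha>)" using Xp by (intro mult_left_mono) auto
        moreover have "t powr \<alpha> \<le> max t (t powr \<alpha>)" by simp
        ultimately show "X powr (\<alpha> - 1) * t + t powr \<alpha> \<le> (X powr (\<alpha> - 1) + 1) * max t (t powr \<alpha>)"
          by (simp add: distrib_right)
      qed simp
      also have "\<dots> = (X powr (\<alpha> - 1) + 1) * h k" unfolding h_def t ta t_def by (simp add: mult.assoc)
      finally show "norm (\<bar>((absK x) powr (\<alpha> - 1) - (real q powi (n - 1 - int i)) powr (\<alpha> - 1)) * u (real q powi (n - 1 - int i))\<bar>
                 * real q powi (n - 1 - int i)) \<le> (X powr (\<alpha> - 1) + 1) * h (n - 1 - int i)"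
        unfolding k_def t_def X_def .
    qed
  qed
  have G: "set_integrable M {y. absK y \<le> absK x} (\<lambda>y. (absK (x - y) powr (\<alpha> - 1) - absK y powr (\<alpha> - 1)) * u (absK y))
    \<and> set_integrable M {y. absK y < absK x} (\<lambda>y. (absK x powr (\<alpha> - 1) - absK y powr (\<alpha> - 1)) * u (absK y))
    \<and> (LINT y:{y. absK y \<le> absK x}|M. (absK (x - y) powr (\<alpha> - 1) - absK y powr (\<alpha> - 1)) * u (absK y))
      = (LINT y:{y. absK y < absK x}|M. (absK x powr (\<alpha> - 1) - absK y powr (\<alpha> - 1)) * u (absK y))
        + u (absK x) * (\<Sum>i. ((real q powi (n - 1 - int i)) powr (\<alpha> - 1) - (absK x) powr (\<alpha> - 1)) * (real q powi (n - 1 - int i) * (1 - 1 / real q)))"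
    using general[where \<phi>="\<lambda>t. t powr (\<alpha> - 1)", OF x n S1 S2] by simp
  have ker: "riesz_kernel absK \<alpha> u x = (\<lambda>y. (absK (x - y) powr (\<alpha> - 1) - absK y powr (\<alpha> - 1)) * u (absK y))"
    using \<alpha>(2) by (simp add: riesz_kernel_def fun_eq_iff)
  have sumv: "(1 - real q powr (-\<alpha>)) / (1 - real q powr (\<alpha> - 1)) *
      (\<Sum>i. ((real q powi (n - 1 - int i)) powr (\<alpha> - 1) - (absK x) powr (\<alpha> - 1)) * (real q powi (n - 1 - int i) * (1 - 1 / real q)))
      = real q powr (-\<alpha>) * absK x powr \<alpha>"
    unfolding tq X_def[symmetric] using powr_sum(2)[OF q_gt1 X0 \<alpha>] by simp
  define c where "c = (1 - real q powr (-\<alpha>)) / (1 - real q powr (\<alpha> - 1))"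
  have "riesz_pot absK M q \<alpha> u x = c * (LINT y:{y. absK y \<le> absK x}|M. (absK (x - y) powr (\<alpha> - 1) - absK y powr (\<alpha> - 1)) * u (absK y))"
    unfolding riesz_pot_def riesz_const_def ker c_def using \<alpha>(2) by simp
  also have "\<dots> = c * (LINT y:{y. absK y < absK x}|M. (absK x powr (\<alpha> - 1) - absK y powr (\<alpha> - 1)) * u (absK y))
      + u (absK x) * (c * (\<Sum>i. ((real q powi (n - 1 - int i)) powr (\<alpha> - 1) - (absK x) powr (\<alpha> - 1)) * (real q powi (n - 1 - int i) * (1 - 1 / real q))))"
    using G by (simp add: algebra_simps)
  also have "\<dots> = real q powr (-\<alpha>) * absK x powr \<alpha> * u (absK x) + c * (LINT y:{y. absK y < absK x}|M. (absK x powr (\<alpha> - 1) - absK y powr (\<alpha> - 1)) * u (absK y))"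
    unfolding c_def sumv by simp
  finally show ?thesis using G unfolding ker c_def by simp
qed


lemma case_eq1:
  fixes u :: "real \<Rightarrow> real"
  assumes hs: "(\<lambda>k::int. \<bar>real_of_int k\<bar> * real q powr real_of_int k * \<bar>u (real q powi k)\<bar>) summable_on {..m}"
    and x: "x \<noteq> 0"
  shows "set_integrable M {y. absK y \<le> absK x} (riesz_kernel absK 1 u x)
     \<and> set_integrable M {y. absK y < absK x} (\<lambda>y. (ln (absK x) - ln (absK y)) * u (absK y))
     \<and> riesz_pot absK M q 1 u x = real q powr (-1) * absK x * u (absK x)
        + (1 - real q) / (real q * ln (real q)) *
          (LINT y : {y. absK y < absK x} | M. (ln (absK x) - ln (absK y)) * u (absK y))"
proof -
  obtain n where n: "absK x = real q powi n" using disc[OF x] by blast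
  define X where "X = absK x"
  have X0: "X > 0" using x nonneg[of x] by (auto simp: X_def less_le)
  have Q0: "real q > 0" using q_gt1 by simp
  have lnq: "ln (real q) > 0" using q_gt1 by simp
  have tq: "real q powi (n - 1 - int i) = X * (1 / real q) ^ Suc i" for i
    unfolding X_def n by (rule ti_eq[OF Q0])
  have S2: "summable (\<lambda>i. \<bar>ln (real q powi (n - 1 - int i)) - ln (absK x)\<bar> * real q powi (n - 1 - int i))"
    unfolding tq X_def[symmetric] using ln_sum(1)[OF q_gt1 X0] by simp
  define h where "h = (\<lambda>k::int. \<bar>real_of_int k\<bar> * real q powr real_of_int k * \<bar>u (real q powi k)\<bar>)"
  have hnn: "h k \<ge> 0" for k unfolding h_def by simp
  have hs': "h summable_on {..m}" using hs unfolding h_def .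
  define p' where "p' = min (n - 1) (-1)"
  have hsum: "summable (\<lambda>i::nat. h (p' - int i))" by (rule sum_int_shift[OF hnn hs'])
  have lnp: "ln (real q powi k) = real_of_int k * ln (real q)" for k
  proof -
    have "real q powi k = real q powr real_of_int k" using Q0 by (simp add: powr_real_of_int')
    then show ?thesis by simp
  qed
  define F where "F = (\<lambda>k::int. \<bar>(ln (absK x) - ln (real q powi k)) * u (real q powi k)\<bar> * real q powi k)"
  have Fp: "summable (\<lambda>i::nat. F (p' - int i))"
  proof (rule summable_comparison_test[OF _ summable_mult[OF hsum, of "(\<bar>real_of_int n\<bar> + 1) * ln (real q)"]])
    show "\<exists>N. \<forall>i\<ge>N. norm (F (p' - int i)) \<le> (\<bar>real_of_int n\<bar> + 1) * ln (real q) * h (p' - int i)"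
    proof (intro exI allI impI)
      fix i :: nat
      define k where "k = p' - int i"
      have k1: "k \<le> -1" unfolding k_def p'_def by simp
      define t where "t = real q powi k"
      have t: "real q powr real_of_int k = t" unfolding t_def using Q0 by (simp add: powr_real_of_int')
      have t0: "t > 0" unfolding t_def using qpos by simp
      have lX: "ln (absK x) = real_of_int n * ln (real q)" unfolding n by (rule lnp)
      have "norm (F k) = \<bar>real_of_int n - real_of_int k\<bar> * ln (real q) * t * \<bar>u t\<bar>"
        unfolding F_def t_def[symmetric] lX using t0 lnq unfolding t_def
        by (simp add: lnp left_diff_distrib[symmetric] abs_mult)
      also have "\<dots> \<le> ((\<bar>real_of_int n\<bar> + 1) * \<bar>real_of_int k\<bar>) * ln (real q) * t * \<bar>u t\<bar>"
      proof (intro mult_right_mono)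
        have "\<bar>real_of_int k\<bar> \<ge> 1" using k1 by simp
        then have "\<bar>real_of_int n\<bar> * 1 \<le> \<bar>real_of_int n\<bar> * \<bar>real_of_int k\<bar>" by (intro mult_left_mono) auto
        then show "\<bar>real_of_int n - real_of_int k\<bar> \<le> (\<bar>real_of_int n\<bar> + 1) * \<bar>real_of_int k\<bar>"
          by (simp add: distrib_right)
      qed (use lnq t0 in auto)
      also have "\<dots> = (\<bar>real_of_int n\<bar> + 1) * ln (real q) * h k" unfolding h_def t t_def[symmetric] by (simp add: algebra_simps)
      finally show "norm (F (p' - int i)) \<le> (\<bar>real_of_int n\<bar> + 1) * ln (real q) * h (p' - int i)"
        unfolding k_def .
    qed
  qed
  have S1: "summable (\<lambda>i. \<bar>(ln (absK x) - ln (real q powi (n - 1 - int i))) * u (real q powi (n - 1 - int i))\<bar>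
                 * real q powi (n - 1 - int i))"
    using shift_start[OF Fp, of "n - 1"] unfolding F_def p'_def by simp
  have G: "set_integrable M {y. absK y \<le> absK x} (\<lambda>y. (ln (absK (x - y)) - ln (absK y)) * u (absK y))
    \<and> set_integrable M {y. absK y < absK x} (\<lambda>y. (ln (absK x) - ln (absK y)) * u (absK y))
    \<and> (LINT y:{y. absK y \<le> absK x}|M. (ln (absK (x - y)) - ln (absK y)) * u (absK y))
      = (LINT y:{y. absK y < absK x}|M. (ln (absK x) - ln (absK y)) * u (absK y))
        + u (absK x) * (\<Sum>i. (ln (real q powi (n - 1 - int i)) - ln (absK x)) * (real q powi (n - 1 - int i) * (1 - 1 / real q)))"
    using general[where \<phi>="ln", OF x n S1 S2] by simp
  have ker: "riesz_kernel absK 1 u x = (\<lambda>y. (ln (absK (x - y)) - ln (absK y)) * u (absK y))"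
    by (simp add: riesz_kernel_def fun_eq_iff)
  have sumv: "(1 - real q) / (real q * ln (real q)) *
      (\<Sum>i. (ln (real q powi (n - 1 - int i)) - ln (absK x)) * (real q powi (n - 1 - int i) * (1 - 1 / real q)))
      = real q powr (-1) * absK x"
    unfolding tq X_def[symmetric] using ln_sum(2)[OF q_gt1 X0] by simp
  define c where "c = (1 - real q) / (real q * ln (real q))"
  have "riesz_pot absK M q 1 u x = c * (LINT y:{y. absK y \<le> absK x}|M. (ln (absK (x - y)) - ln (absK y)) * u (absK y))"
    unfolding riesz_pot_def riesz_const_def ker c_def by simp
  also have "\<dots> = c * (LINT y:{y. absK y < absK x}|M. (ln (absK x) - ln (absK y)) * u (absK y))
      + u (absK x) * (c * (\<Sum>i. (ln (real q powi (n - 1 - int i)) - ln (absK x)) * (real q powi (n - 1 - int i) * (1 - 1 / real q))))"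
    using G by (simp add: algebra_simps)
  also have "\<dots> = real q powr (-1) * absK x * u (absK x) + c * (LINT y:{y. absK y < absK x}|M. (ln (absK x) - ln (absK y)) * u (absK y))"
    unfolding c_def sumv by simp
  finally show ?thesis using G unfolding ker c_def by simp
qed

lemma zero_case: "set_integrable M {y. absK y \<le> absK 0} (riesz_kernel absK \<alpha> u 0)"
proof -
  have "(\<lambda>y. indicator {y. absK y \<le> absK 0} y *\<^sub>R riesz_kernel absK \<alpha> u 0 y)
      = (\<lambda>y. indicator {0} y * riesz_kernel absK \<alpha> u 0 0)"
  proof
    fix y show "indicator {y. absK y \<le> absK 0} y *\<^sub>R riesz_kernel absK \<alpha> u 0 y = indicator {0} y * riesz_kernel absK \<alpha> u 0 0"
      using nonneg[of y] by (cases "y = 0") (auto simp: indicator_def)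
  qed
  moreover have "integrable M (\<lambda>y. indicator {0} y * riesz_kernel absK \<alpha> u 0 0)"
    using sing_fm[of 0] by (intro integrable_mult_left integrable_real_indicator) (auto simp: fmeasurable_def)
  ultimately show ?thesis unfolding set_integrable_def by simp
qed

lemma main:
  fixes \<alpha> :: real and u :: "real \<Rightarrow> real"
  assumes alpha_pos: "\<alpha> > 0"
    and summ: "\<alpha> \<noteq> 1 \<Longrightarrow> \<exists>m::int.
        (\<lambda>k::int. max (real q powr real_of_int k) (real q powr (\<alpha> * real_of_int k))
                     * \<bar>u (real q powi k)\<bar>) summable_on {..m}"
    and summ1: "\<alpha> = 1 \<Longrightarrow> \<exists>m::int.
        (\<lambda>k::int. \<bar>real_of_int k\<bar> * real q powr real_of_int k * \<bar>u (real q powi k)\<bar>)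
          summable_on {..m}"
  shows "(\<forall>x. set_integrable M {y. absK y \<le> absK x} (riesz_kernel absK \<alpha> u x))
       \<and> (\<forall>x y. absK x = absK y \<longrightarrow> riesz_pot absK M q \<alpha> u x = riesz_pot absK M q \<alpha> u y)
       \<and> (\<alpha> \<noteq> 1 \<longrightarrow> (\<forall>x. x \<noteq> 0 \<longrightarrow>
            set_integrable M {y. absK y < absK x}
              (\<lambda>y. (absK x powr (\<alpha> - 1) - absK y powr (\<alpha> - 1)) * u (absK y))
          \<and> riesz_pot absK M q \<alpha> u x =
              real q powr (-\<alpha>) * absK x powr \<alpha> * u (absK x)
              + (1 - real q powr (-\<alpha>)) / (1 - real q powr (\<alpha> - 1)) *
                (LINT y : {y. absK y < absK x} | M.
                   (absK x powr (\<alpha> - 1) - absK y powr (\<alpha> - 1)) * u (absK y))))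
       \<and> (\<alpha> = 1 \<longrightarrow> (\<forall>x. x \<noteq> 0 \<longrightarrow>
            set_integrable M {y. absK y < absK x}
              (\<lambda>y. (ln (absK x) - ln (absK y)) * u (absK y))
          \<and> riesz_pot absK M q \<alpha> u x =
              real q powr (-1) * absK x * u (absK x)
              + (1 - real q) / (real q * ln (real q)) *
                (LINT y : {y. absK y < absK x} | M.
                   (ln (absK x) - ln (absK y)) * u (absK y))))"
proof (cases "\<alpha> = 1")
  case False
  then obtain m where hs: "(\<lambda>k::int. max (real q powr real_of_int k) (real q powr (\<alpha> * real_of_int k))
                     * \<bar>u (real q powi k)\<bar>) summable_on {..m}" using summ by blast
  note C = case_ne1[OF alpha_pos False hs]
  have I: "set_integrable M {y. absK y \<le> absK x} (riesz_kernel absK \<alpha> u x)" for x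
    using C[of x] zero_case by (cases "x = 0") auto
  have Rad: "riesz_pot absK M q \<alpha> u x = riesz_pot absK M q \<alpha> u y" if "absK x = absK y" for x y
  proof (cases "x = 0")
    case True
    then have "y = 0" using that by simp
    then show ?thesis using True by simp
  next
    case False
    then have "y \<noteq> 0" using that by auto
    then show ?thesis using C[OF False] C[of y] that by simp
  qed
  show ?thesis
  proof (intro conjI allI impI)
    fix x show "set_integrable M {y. absK y \<le> absK x} (riesz_kernel absK \<alpha> u x)" by (rule I)
  next
    fix x y :: 'a assume "absK x = absK y" then show "riesz_pot absK M q \<alpha> u x = riesz_pot absK M q \<alpha> u y" by (rule Rad)
  next
    fix x :: 'a assume "x \<noteq> 0"
    then show "set_integrable M {y. absK y < absK x} (\<lambda>y. (absK x powr (\<alpha> - 1) - absK y powr (\<alpha> - 1)) * u (absK y))"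
      using C by blast
  next
    fix x :: 'a assume "x \<noteq> 0"
    then show "riesz_pot absK M q \<alpha> u x = real q powr (-\<alpha>) * absK x powr \<alpha> * u (absK x)
              + (1 - real q powr (-\<alpha>)) / (1 - real q powr (\<alpha> - 1)) *
                (LINT y : {y. absK y < absK x} | M.
                   (absK x powr (\<alpha> - 1) - absK y powr (\<alpha> - 1)) * u (absK y))"
      using C by blast
  qed (use False in auto)
next
  case True
  then obtain m where hs: "(\<lambda>k::int. \<bar>real_of_int k\<bar> * real q powr real_of_int k * \<bar>u (real q powi k)\<bar>)
          summable_on {..m}" using summ1 by blast
  note C = case_eq1[OF hs]
  have I: "set_integrable M {y. absK y \<le> absK x} (riesz_kernel absK \<alpha> u x)" for x
    using C[of x] zero_case True by (cases "x = 0") auto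
  have Rad: "riesz_pot absK M q \<alpha> u x = riesz_pot absK M q \<alpha> u y" if "absK x = absK y" for x y
  proof (cases "x = 0")
    case True
    then have "y = 0" using that by simp
    then show ?thesis using True by simp
  next
    case False
    then have "y \<noteq> 0" using that by auto
    then show ?thesis using C[OF False] C[of y] that True by simp
  qed
  show ?thesis
  proof (intro conjI allI impI)
    fix x show "set_integrable M {y. absK y \<le> absK x} (riesz_kernel absK \<alpha> u x)" by (rule I)
  next
    fix x y :: 'a assume "absK x = absK y" then show "riesz_pot absK M q \<alpha> u x = riesz_pot absK M q \<alpha> u y" by (rule Rad)
  next
    fix x :: 'a assume "x \<noteq> 0"
    then show "set_integrable M {y. absK y < absK x} (\<lambda>y. (ln (absK x) - ln (absK y)) * u (absK y))"
      using C by blast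
  next
    fix x :: 'a assume "x \<noteq> 0"
    then show "riesz_pot absK M q \<alpha> u x = real q powr (-1) * absK x * u (absK x)
              + (1 - real q) / (real q * ln (real q)) *
                (LINT y : {y. absK y < absK x} | M.
                   (ln (absK x) - ln (absK y)) * u (absK y))"
      using C True by blast
  qed (use True in auto)
qed

end
theorem lemma2:
  fixes absK :: "'a::field \<Rightarrow> real" and M :: "'a measure" and q :: nat
    and \<alpha> :: real and u :: "real \<Rightarrow> real"
  assumes K: "nonarch_local_field absK M q"
    and alpha_pos: "\<alpha> > 0"
    and summ: "\<alpha> \<noteq> 1 \<Longrightarrow> \<exists>m::int.
        (\<lambda>k::int. max (real q powr real_of_int k) (real q powr (\<alpha> * real_of_int k))
                     * \<bar>u (real q powi k)\<bar>) summable_on {..m}"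
    and summ1: "\<alpha> = 1 \<Longrightarrow> \<exists>m::int.
        (\<lambda>k::int. \<bar>real_of_int k\<bar> * real q powr real_of_int k * \<bar>u (real q powi k)\<bar>)
          summable_on {..m}"
  shows "(\<forall>x. set_integrable M {y. absK y \<le> absK x} (riesz_kernel absK \<alpha> u x))
       \<and> (\<forall>x y. absK x = absK y \<longrightarrow> riesz_pot absK M q \<alpha> u x = riesz_pot absK M q \<alpha> u y)
       \<and> (\<alpha> \<noteq> 1 \<longrightarrow> (\<forall>x. x \<noteq> 0 \<longrightarrow>
            set_integrable M {y. absK y < absK x}
              (\<lambda>y. (absK x powr (\<alpha> - 1) - absK y powr (\<alpha> - 1)) * u (absK y))
          \<and> riesz_pot absK M q \<alpha> u x =
              real q powr (-\<alpha>) * absK x powr \<alpha> * u (absK x)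
              + (1 - real q powr (-\<alpha>)) / (1 - real q powr (\<alpha> - 1)) *
                (LINT y : {y. absK y < absK x} | M.
                   (absK x powr (\<alpha> - 1) - absK y powr (\<alpha> - 1)) * u (absK y))))
       \<and> (\<alpha> = 1 \<longrightarrow> (\<forall>x. x \<noteq> 0 \<longrightarrow>
            set_integrable M {y. absK y < absK x}
              (\<lambda>y. (ln (absK x) - ln (absK y)) * u (absK y))
          \<and> riesz_pot absK M q \<alpha> u x =
              real q powr (-1) * absK x * u (absK x)
              + (1 - real q) / (real q * ln (real q)) *
                (LINT y : {y. absK y < absK x} | M.
                   (ln (absK x) - ln (absK y)) * u (absK y))))"
    using nlf.main[OF nlf.intro[OF K] alpha_pos summ summ1] .

end
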